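(* Let $p\ge2$ and $0\le r<k$ be integers and $\alpha>k$ real. Then $$\sum_{n=1}^\infty\frac{H_{n+\alpha-r}-H_{n+\alpha-k}}{n^p}=\sum_{i=1}^{p-1}(-1)^{i-1}\zeta(p+1-i)\Big(H_{\alpha-r}^{(i)}-H_{\alpha-k}^{(i)}\Big)+(-1)^{p-1}\sum_{j=1}^{k-r}\frac{H_{j+\alpha-k}}{(j+\alpha-k)^p},$$ and moreover $H_{\alpha-r}^{(i)}-H_{\alpha-k}^{(i)}=\sum_{j=1}^{k-r}(j+\alpha-k)^{-i}$ for every integer $i\ge1$.
   Context: Shifted harmonic numbers: for a real $\alpha$ that is not a negative integer, $H_\alpha := \sum_{k=1}^\infty\left(\frac1k-\frac1{k+\alpha}\right)$ and, for integers $m\ge 2$, $H_\alpha^{(m)} := \sum_{k=1}^\infty\left(\frac1{k^m}-\frac1{(k+\alpha)^m}\right)=\zeta(m)-\zeta(m,\alpha+1)$, where $\zeta$ is the Riemann zeta function and $\zeta(s,\alpha+1)=\sum_{n=1}^\infty (n+\alpha)^{-s}$ is the Hurwitz zeta function; $H_\alpha^{(1)}:=H_\alpha$. Empty sums are $0$. *)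

theory Defs
  imports "HOL-Analysis.Analysis"
begin

definition zeta_nat :: "nat \<Rightarrow> real" where
  "zeta_nat m = (\<Sum>n. 1 / real (Suc n) ^ m)"

text \<open>Shifted generalized harmonic number
  H_alpha^(m) = sum_{k>=1} (1/k^m - 1/(k+alpha)^m), for real alpha not a negative integer.
  The sum index k = 1,2,... is written as Suc k with k ranging over nat.\<close>
definition shifted_harm :: "nat \<Rightarrow> real \<Rightarrow> real" where
  "shifted_harm m \<alpha> = (\<Sum>k. 1 / real (Suc k) ^ m - 1 / (real (Suc k) + \<alpha>) ^ m)"

abbreviation shifted_H :: "real \<Rightarrow> real" where
  "shifted_H \<alpha> \<equiv> shifted_harm 1 \<alpha>"

end

theory Submission
  imports Defs
begin

lemma zeta_summable:
  assumes "m \<ge> 2"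
  shows "summable (\<lambda>n. 1 / real (Suc n) ^ m)"
proof -
  have "summable (\<lambda>n. inverse (real n ^ m))"
    using inverse_power_summable[OF assms] by simp
  then have "summable (\<lambda>n. inverse (real (Suc n) ^ m))"
    by (subst summable_Suc_iff)
  then show ?thesis by (simp add: divide_inverse)
qed

lemma zeta_sums: "m \<ge> 2 \<Longrightarrow> (\<lambda>n. 1 / real (Suc n) ^ m) sums zeta_nat m"
  unfolding zeta_nat_def using zeta_summable summable_sums by blast

lemma harm_summable:
  assumes "i \<ge> 1" "y \<ge> 0"
  shows "summable (\<lambda>k. 1 / real (Suc k) ^ i - 1 / (real (Suc k) + y) ^ i)"
proof (cases "i = 1")
  case True
  have s: "summable (\<lambda>k. y * (1 / real (Suc k) ^ 2))"
    by (intro summable_mult zeta_summable) simp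
  show ?thesis
  proof (rule summable_comparison_test[OF _ s], intro exI allI impI)
    fix k :: nat
    have a: "real (Suc k) > 0" by simp
    have eq: "1 / real (Suc k) ^ i - 1 / (real (Suc k) + y) ^ i = y / (real (Suc k) * (real (Suc k) + y))"
      using True a assms by (simp add: field_simps)
    have "y / (real (Suc k) * (real (Suc k) + y)) \<le> y / (real (Suc k) * real (Suc k))"
      using a assms by (intro divide_left_mono mult_left_mono) auto
    moreover have nn: "0 \<le> y / (real (Suc k) * (real (Suc k) + y))" using a assms by simp
    ultimately show "norm (1 / real (Suc k) ^ i - 1 / (real (Suc k) + y) ^ i) \<le> y * (1 / real (Suc k) ^ 2)"
      unfolding eq real_norm_def abs_of_nonneg[OF nn] by (simp add: power2_eq_square)
  qed
next
  case False
  then have i2: "i \<ge> 2" using assms by simp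
  show ?thesis
  proof (rule summable_comparison_test[OF _ zeta_summable[OF i2]], intro exI allI impI)
    fix k :: nat
    have a: "real (Suc k) > 0" by simp
    have le: "1 / (real (Suc k) + y) ^ i \<le> 1 / real (Suc k) ^ i"
      using a assms by (intro divide_left_mono power_mono mult_pos_pos) auto
    have "0 \<le> 1 / (real (Suc k) + y) ^ i" using a assms by simp
    then show "norm (1 / real (Suc k) ^ i - 1 / (real (Suc k) + y) ^ i) \<le> 1 / real (Suc k) ^ i"
      using le by simp
  qed
qed

lemma harm_step:
  assumes "i \<ge> 1" "y \<ge> 0"
  shows "shifted_harm i (y + 1) - shifted_harm i y = 1 / (1 + y) ^ i"
proof -
  define g where "g k = 1 / (real k + 1 + y) ^ i" for k
  have g0: "g \<longlonglongrightarrow> 0"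
  proof (rule tendsto_sandwich[OF _ _ tendsto_const LIMSEQ_inverse_real_of_nat])
    show "\<forall>\<^sub>F n in sequentially. 0 \<le> g n" using assms by (simp add: g_def)
    show "\<forall>\<^sub>F n in sequentially. g n \<le> inverse (real (Suc n))"
    proof (intro always_eventually allI)
      fix n
      have b: "real n + 1 + y \<ge> 1" using assms by simp
      have "(real n + 1 + y) ^ 1 \<le> (real n + 1 + y) ^ i"
        using b assms by (intro power_increasing) auto
      moreover have "real n + 1 \<le> real n + 1 + y" using assms by simp
      ultimately have "real n + 1 \<le> (real n + 1 + y) ^ i" by simp
      then show "g n \<le> inverse (real (Suc n))"
        unfolding g_def by (simp add: field_simps)
    qed
  qed
  have t: "(\<lambda>n. g n - g (Suc n)) sums (g 0 - 0)" by (rule telescope_sums'[OF g0])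
  have s1: "summable (\<lambda>k. 1 / real (Suc k) ^ i - 1 / (real (Suc k) + (y+1)) ^ i)"
    using harm_summable[OF assms(1), of "y+1"] assms(2) by simp
  note s0 = harm_summable[OF assms]
  have "shifted_harm i (y + 1) - shifted_harm i y
     = (\<Sum>k. (1 / real (Suc k) ^ i - 1 / (real (Suc k) + (y+1)) ^ i)
             - (1 / real (Suc k) ^ i - 1 / (real (Suc k) + y) ^ i))"
    unfolding shifted_harm_def using suminf_diff[OF s1 s0] by simp
  also have "\<dots> = (\<Sum>k. g k - g (Suc k))"
    by (rule suminf_cong) (simp add: g_def algebra_simps)
  also have "\<dots> = g 0" using t sums_unique by fastforce
  finally show ?thesis by (simp add: g_def add.commute)
qed

lemma harm_shift:
  assumes "i \<ge> 1" "x \<ge> 0"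
  shows "shifted_harm i (x + real d) - shifted_harm i x = (\<Sum>j=1..d. 1 / (real j + x) ^ i)"
proof (induction d)
  case 0
  then show ?case by simp
next
  case (Suc d)
  have "shifted_harm i (x + real (Suc d)) - shifted_harm i (x + real d) = 1 / (1 + (x + real d)) ^ i"
    using harm_step[OF assms(1), of "x + real d"] assms by (simp add: ac_simps)
  then show ?case using Suc by (simp add: ac_simps)
qed

lemma F_sums:
  assumes a: "a > 0"
  shows "(\<lambda>n. 1 / (real (Suc n) ^ Suc q * (real (Suc n) + a))) sums
     ((\<Sum>i<q. (-1)^i / a^Suc i * zeta_nat (Suc q - i)) + (-1)^q / a^Suc q * shifted_H a)"
proof (induction q)
  case 0
  have h: "(\<lambda>k. 1 / real (Suc k) ^ 1 - 1 / (real (Suc k) + a) ^ 1) sums shifted_H a"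
    unfolding shifted_harm_def using harm_summable[of 1 a] a by (intro summable_sums) simp
  have "(\<lambda>k. (1/a) * (1 / real (Suc k) ^ 1 - 1 / (real (Suc k) + a) ^ 1)) sums ((1/a) * shifted_H a)"
    by (rule sums_mult[OF h])
  moreover have "(\<lambda>k. (1/a) * (1 / real (Suc k) ^ 1 - 1 / (real (Suc k) + a) ^ 1))
      = (\<lambda>n. 1 / (real (Suc n) ^ Suc 0 * (real (Suc n) + a)))"
  proof
    fix k
    have "real (Suc k) > 0" by simp
    then show "(1/a) * (1 / real (Suc k) ^ 1 - 1 / (real (Suc k) + a) ^ 1)
      = 1 / (real (Suc k) ^ Suc 0 * (real (Suc k) + a))"
      using a by (simp add: field_simps)
  qed
  ultimately show ?case by simp
next
  case (Suc q)
  define S where "S = (\<Sum>i<q. (-1)^i / a^Suc i * zeta_nat (Suc q - i))"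
  define H where "H = shifted_H a"
  have z: "(\<lambda>n. 1 / real (Suc n) ^ Suc (Suc q)) sums zeta_nat (Suc (Suc q))"
    by (rule zeta_sums) simp
  have d: "(\<lambda>n. (1/a) * (1 / real (Suc n) ^ Suc (Suc q)) - (1/a) * (1 / (real (Suc n) ^ Suc q * (real (Suc n) + a))))
     sums ((1/a) * zeta_nat (Suc (Suc q)) - (1/a) * (S + (-1)^q / a^Suc q * H))"
    using sums_diff[OF sums_mult[OF z, where c="1/a"] sums_mult[OF Suc.IH, where c="1/a"]] unfolding S_def H_def .
  have fe: "(\<lambda>n. (1/a) * (1 / real (Suc n) ^ Suc (Suc q)) - (1/a) * (1 / (real (Suc n) ^ Suc q * (real (Suc n) + a))))
     = (\<lambda>n. 1 / (real (Suc n) ^ Suc (Suc q) * (real (Suc n) + a)))"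
  proof
    fix n
    have gen: "(1/a) * (1 / (m * t)) - (1/a) * (1 / (t * (m + a))) = 1 / ((m * t) * (m + a))"
      if "m > 0" "t > 0" for m t :: real
      using that a by (simp add: divide_simps)
    have "real (Suc n) > 0" by simp
    from gen[OF this, of "real (Suc n) ^ Suc q"] this
    show "(1/a) * (1 / real (Suc n) ^ Suc (Suc q)) - (1/a) * (1 / (real (Suc n) ^ Suc q * (real (Suc n) + a)))
      = 1 / (real (Suc n) ^ Suc (Suc q) * (real (Suc n) + a))"
      by (simp only: power_Suc[of _ "Suc q"]) simp
  qed
  have ve: "(1/a) * zeta_nat (Suc (Suc q)) - (1/a) * (S + (-1)^q / a^Suc q * H)
     = (\<Sum>i<Suc q. (-1)^i / a^Suc i * zeta_nat (Suc (Suc q) - i)) + (-1)^Suc q / a^Suc (Suc q) * H"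
  proof -
    have A: "(\<Sum>i<Suc q. (-1)^i / a^Suc i * zeta_nat (Suc (Suc q) - i))
       = 1/a * zeta_nat (Suc (Suc q)) + (\<Sum>i<q. (-1)^Suc i / a^Suc (Suc i) * zeta_nat (Suc q - i))"
      by (subst sum.lessThan_Suc_shift) simp
    have B: "(\<Sum>i<q. (-1)^Suc i / a^Suc (Suc i) * zeta_nat (Suc q - i)) = -(1/a) * S"
      unfolding S_def sum_distrib_left by (rule sum.cong) (auto simp: field_simps)
    show ?thesis unfolding A B using a by (simp add: field_simps)
  qed
  show ?case using d unfolding fe ve by (simp only: H_def)
qed

theorem mainTheorem9:
  fixes p r k :: nat and \<alpha> :: real
  assumes "p \<ge> 2" and "r < k" and "\<alpha> > real k"
  shows "(\<lambda>n. (shifted_H (real (Suc n) + \<alpha> - real r) - shifted_H (real (Suc n) + \<alpha> - real k))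
              / real (Suc n) ^ p)
         sums ((\<Sum>i=1..p-1. (-1) ^ (i - 1) * zeta_nat (p + 1 - i)
                   * (shifted_harm i (\<alpha> - real r) - shifted_harm i (\<alpha> - real k)))
               + (-1) ^ (p - 1) * (\<Sum>j=1..k-r. shifted_H (real j + \<alpha> - real k)
                   / (real j + \<alpha> - real k) ^ p))
       \<and> (\<forall>i::nat. i \<ge> 1 \<longrightarrow>
            shifted_harm i (\<alpha> - real r) - shifted_harm i (\<alpha> - real k)
              = (\<Sum>j=1..k-r. 1 / (real j + \<alpha> - real k) ^ i))"
proof -
  define d where "d = k - r"
  define \<beta> where "\<beta> = \<alpha> - real k"
  obtain q where pq: "p = Suc q" using assms(1) by (cases p) auto
  have b0: "\<beta> > 0" using assms(3) by (simp add: \<beta>_def)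
  have eqr: "\<alpha> - real r = \<beta> + real d" using assms(2) by (simp add: \<beta>_def d_def of_nat_diff)
  have aj: "real j + \<alpha> - real k = real j + \<beta>" for j by (simp add: \<beta>_def)
  have part2: "shifted_harm i (\<alpha> - real r) - shifted_harm i (\<alpha> - real k)
              = (\<Sum>j=1..k-r. 1 / (real j + \<alpha> - real k) ^ i)" if "i \<ge> 1" for i
  proof -
    have "shifted_harm i (\<beta> + real d) - shifted_harm i \<beta> = (\<Sum>j=1..d. 1 / (real j + \<beta>) ^ i)"
      by (rule harm_shift[OF that]) (use b0 in simp)
    then show ?thesis unfolding eqr aj d_def[symmetric] by (simp add: \<beta>_def)
  qed
  have termeq: "(shifted_H (real (Suc n) + \<alpha> - real r) - shifted_H (real (Suc n) + \<alpha> - real k))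
              / real (Suc n) ^ p
      = (\<Sum>j\<in>{1..d}. 1 / (real (Suc n) ^ Suc q * (real (Suc n) + (real j + \<beta>))))" for n
  proof -
    have x0: "real (Suc n) + \<beta> \<ge> 0" using b0 by simp
    have e1: "real (Suc n) + \<alpha> - real r = (real (Suc n) + \<beta>) + real d" using eqr by simp
    have e2: "real (Suc n) + \<alpha> - real k = real (Suc n) + \<beta>" by (simp add: \<beta>_def)
    have "shifted_H (real (Suc n) + \<alpha> - real r) - shifted_H (real (Suc n) + \<alpha> - real k)
       = (\<Sum>j=1..d. 1 / (real j + (real (Suc n) + \<beta>)) ^ 1)"
      unfolding e1 e2 by (rule harm_shift[OF _ x0]) simp
    then have "(shifted_H (real (Suc n) + \<alpha> - real r) - shifted_H (real (Suc n) + \<alpha> - real k))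
              / real (Suc n) ^ p = (\<Sum>j=1..d. 1 / (real j + (real (Suc n) + \<beta>)) ^ 1) / real (Suc n) ^ Suc q"
      unfolding pq by simp
    also have "\<dots> = (\<Sum>j\<in>{1..d}. 1 / (real (Suc n) ^ Suc q * (real (Suc n) + (real j + \<beta>))))"
      unfolding sum_divide_distrib by (intro sum.cong) (simp_all add: algebra_simps)
    finally show ?thesis .
  qed
  have S: "(\<lambda>n. (\<Sum>j\<in>{1..d}. 1 / (real (Suc n) ^ Suc q * (real (Suc n) + (real j + \<beta>)))))
     sums (\<Sum>j\<in>{1..d}. (\<Sum>i<q. (-1)^i / (real j + \<beta>)^Suc i * zeta_nat (Suc q - i))
              + (-1)^q / (real j + \<beta>)^Suc q * shifted_H (real j + \<beta>))"
    by (intro sums_sum F_sums) (use b0 in simp)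
  have val: "(\<Sum>j\<in>{1..d}. (\<Sum>i<q. (-1)^i / (real j + \<beta>)^Suc i * zeta_nat (Suc q - i))
              + (-1)^q / (real j + \<beta>)^Suc q * shifted_H (real j + \<beta>))
     = (\<Sum>i=1..p-1. (-1) ^ (i - 1) * zeta_nat (p + 1 - i)
                   * (shifted_harm i (\<alpha> - real r) - shifted_harm i (\<alpha> - real k)))
               + (-1) ^ (p - 1) * (\<Sum>j=1..k-r. shifted_H (real j + \<alpha> - real k)
                   / (real j + \<alpha> - real k) ^ p)"
  proof -
    have L: "(\<Sum>i=1..p-1. (-1) ^ (i - 1) * zeta_nat (p + 1 - i)
                   * (shifted_harm i (\<alpha> - real r) - shifted_harm i (\<alpha> - real k)))
        = (\<Sum>i<q. (-1) ^ i * zeta_nat (Suc q - i) * (\<Sum>j\<in>{1..d}. 1 / (real j + \<beta>) ^ Suc i))"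
      unfolding pq by (simp add: sum.atLeast1_atMost_eq part2 aj d_def)
    have R: "(\<Sum>j=1..k-r. shifted_H (real j + \<alpha> - real k) / (real j + \<alpha> - real k) ^ p)
        = (\<Sum>j\<in>{1..d}. shifted_H (real j + \<beta>) / (real j + \<beta>) ^ Suc q)"
      unfolding aj pq d_def ..
    have A: "(\<Sum>j\<in>{1..d}. (\<Sum>i<q. (-1)^i / (real j + \<beta>)^Suc i * zeta_nat (Suc q - i)))
        = (\<Sum>i<q. (-1) ^ i * zeta_nat (Suc q - i) * (\<Sum>j\<in>{1..d}. 1 / (real j + \<beta>) ^ Suc i))"
      by (subst sum.swap) (simp add: sum_distrib_left)
    have B: "(\<Sum>j\<in>{1..d}. (-1)^q / (real j + \<beta>)^Suc q * shifted_H (real j + \<beta>))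
        = (-1)^q * (\<Sum>j\<in>{1..d}. shifted_H (real j + \<beta>) / (real j + \<beta>) ^ Suc q)"
      by (simp add: sum_distrib_left)
    show ?thesis unfolding L R sum.distrib A B using pq by simp
  qed
  show ?thesis
    using S unfolding val termeq[symmetric] using part2 by simp
qed

end
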